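(* Let $q$ be a power of $2$, let $b\in\mathbb{F}_q$ with $b\ne0$, and let $n\ge2$ be an integer. Let $r\ge0$ be such that $2^r$ divides $n+1$ but $2^{r+1}$ does not, and let $m\ge0$ be defined by $n+1=2^r(m+1)$. Assume $r\ge1$ and $\gcd(m+1,q^2-1)=1$. Then $\hat C_n(a,b)$ is LCD for every $a\in\mathbb{F}_q\setminus\{1\}$.
   Context: For $a,b\in\mathbb{F}_q$ and $n\ge 2$, $\hat T_n(a,b)$ denotes the $n\times n$ symmetric tridiagonal Toeplitz matrix over $\mathbb{F}_q$ with all diagonal entries equal to $a$, all entries on the first super- and sub-diagonals equal to $b$, and all other entries $0$. $\hat C_n(a,b)$ is the $[2n,n]$ linear code over $\mathbb{F}_q$ with generator matrix $[I_n\mid \hat T_n(a,b)]$. A linear code $C$ is LCD if $C\cap C^\perp=\{0\}$ (Euclidean dual). *)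

theory Defs
  imports "Jordan_Normal_Form.Matrix"
begin

definition tridiag_toeplitz :: "nat \<Rightarrow> 'a::field \<Rightarrow> 'a \<Rightarrow> 'a mat" where
  "tridiag_toeplitz n a b = mat n n (\<lambda>(i,j). if i = j then a
        else if i = j + 1 \<or> j = i + 1 then b else 0)"

definition gen_mat :: "nat \<Rightarrow> 'a::field \<Rightarrow> 'a \<Rightarrow> 'a mat" where
  "gen_mat n a b = mat n (2*n) (\<lambda>(i,j). if j < n then (if i = j then 1 else 0)
        else tridiag_toeplitz n a b $$ (i, j - n))"

definition code_of :: "'a::field mat \<Rightarrow> 'a vec set" where
  "code_of G = {transpose_mat G *\<^sub>v u | u. u \<in> carrier_vec (dim_row G)}"

definition dual_code :: "nat \<Rightarrow> 'a::field vec set \<Rightarrow> 'a vec set" where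
  "dual_code len C = {y \<in> carrier_vec len. \<forall>x\<in>C. x \<bullet> y = 0}"

definition is_LCD :: "nat \<Rightarrow> 'a::field vec set \<Rightarrow> bool" where
  "is_LCD len C \<longleftrightarrow> C \<inter> dual_code len C = {0\<^sub>v len}"

definition C_hat :: "nat \<Rightarrow> 'a::field \<Rightarrow> 'a \<Rightarrow> 'a vec set" where
  "C_hat n a b = code_of (gen_mat n a b)"

end

theory Submission
  imports Defs "HOL-Computational_Algebra.Polynomial"
begin


lemma fermat_ff:
  fixes a :: "'a::{field,finite}"
  shows "a ^ card (UNIV::'a set) = a"
proof (cases "a = 0")
  case True then show ?thesis by (simp add: zero_power card_gt_0_iff)
next
  case False
  let ?S = "UNIV - {0::'a}"
  have bij: "bij_betw ((*) a) ?S ?S"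
  proof (rule bij_betwI')
    fix y assume "y \<in> ?S"
    then show "\<exists>x\<in>?S. y = a * x" using False
      by (intro bexI[of _ "inverse a * y"]) auto
  qed (use False in auto)
  have "(\<Prod>y\<in>?S. a * y) = (\<Prod>y\<in>?S. y)"
    using prod.reindex_bij_betw[OF bij, of "\<lambda>y. y"] by simp
  moreover have "(\<Prod>y\<in>?S. a * y) = a ^ card ?S * (\<Prod>y\<in>?S. y)"
    by (simp add: prod.distrib)
  moreover have "(\<Prod>y\<in>?S. y) \<noteq> 0" by simp
  ultimately have "a ^ card ?S = 1" by simp
  moreover have "card ?S = card (UNIV::'a set) - 1" by (simp add: card_Diff_singleton)
  moreover have "card (UNIV::'a set) \<ge> 1" by (simp add: Suc_leI card_gt_0_iff)
  ultimately have "a ^ (card (UNIV::'a set) - 1) = 1" by simp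
  then have "a * a ^ (card (UNIV::'a set) - 1) = a" by simp
  then show ?thesis
    using \<open>card (UNIV::'a set) \<ge> 1\<close> by (simp add: power_eq_if split: if_splits)
qed



lemma char2_neg:
  fixes y :: "'b::comm_ring_1"
  assumes "(2::'b) = 0" shows "- y = y"
proof -
  have "y + y = 2 * y" by (rule mult_2[symmetric])
  then have "y + y = 0" using assms by simp
  then show ?thesis by (simp add: neg_eq_iff_add_eq_0)
qed

lemma frob2:
  fixes x y :: "'b::comm_ring_1"
  assumes "(2::'b) = 0" shows "(x + y) ^ (2 ^ j) = x ^ (2 ^ j) + y ^ (2 ^ j)"
proof (induction j)
  case 0 then show ?case by simp
next
  case (Suc j)
  have sq: "(u + v)^2 = u^2 + v^2" for u v :: 'b
    using assms by (simp add: power2_sum)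
  have "(x + y) ^ (2 ^ Suc j) = ((x + y) ^ (2 ^ j))^2"
    by (simp add: power_mult[symmetric] mult.commute)
  also have "\<dots> = (x ^ (2 ^ j))^2 + (y ^ (2 ^ j))^2" using Suc sq by simp
  also have "\<dots> = x ^ (2 ^ Suc j) + y ^ (2 ^ Suc j)"
    by (simp add: power_mult[symmetric] mult.commute)
  finally show ?case .
qed

lemma char2_poly:
  assumes "(2::'a::field) = 0" shows "(2::'a poly) = 0"
proof -
  have "(2::'a poly) = of_nat 2" by simp
  also have "\<dots> = [:of_nat 2:]" by (rule of_nat_poly)
  finally show ?thesis using assms by simp
qed

fun Useq :: "'a::field \<Rightarrow> nat \<Rightarrow> 'a" where
  "Useq x 0 = 0"
| "Useq x (Suc 0) = 1"
| "Useq x (Suc (Suc k)) = x * Useq x (Suc k) + Useq x k"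

lemma cassini:
  fixes x :: "'a::field"
  assumes "(2::'a) = 0"
  shows "Useq x (Suc k) ^ 2 + Useq x (Suc (Suc k)) * Useq x k = 1"
proof (induction k)
  case 0 then show ?case by simp
next
  case (Suc k)
  define a where "a = Useq x k"
  define b where "b = Useq x (Suc k)"
  have IH: "b^2 + (x*b+a)*a = 1" using Suc unfolding a_def b_def by simp
  have "Useq x (Suc (Suc k)) ^ 2 + Useq x (Suc (Suc (Suc k))) * Useq x (Suc k)
      = (x*b+a)^2 + (x*(x*b+a)+b)*b" unfolding a_def b_def by simp
  also have "\<dots> = (b^2 + (x*b+a)*a) + 2 * (x*x*b*b + x*a*b)"
    by (simp add: algebra_simps power2_eq_square)
  also have "\<dots> = 1" using IH assms by simp
  finally show ?case .
qed

lemma sq_eq_one_char2: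
  assumes "(2::'a::field) = 0" and "y^2 = (1::'a)" shows "y = 1"
proof -
  have "(y + 1)^2 = y^2 + 1 + 2*y" by (simp add: power2_sum)
  also have "\<dots> = 0" using assms by simp
  finally have "y + 1 = 0" by simp
  then have "y = - 1" by (simp add: eq_neg_iff_add_eq_0)
  then show ?thesis using char2_neg[OF assms(1), of 1] by simp
qed



lemma cg_trans: "d dvd a - b \<Longrightarrow> d dvd b - c \<Longrightarrow> d dvd a - (c::'b::comm_ring_1)"
  by (metis diff_add_cancel add_diff_eq dvd_add)
lemma cg_sym: "d dvd a - b \<Longrightarrow> d dvd b - (a::'b::comm_ring_1)"
  by (metis dvd_minus_iff minus_diff_eq)
lemma cg_add: "d dvd a - b \<Longrightarrow> d dvd c - e \<Longrightarrow> d dvd (a + c) - (b + (e::'b::comm_ring_1))"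
proof -
  assume "d dvd a - b" "d dvd c - e"
  then have "d dvd (a - b) + (c - e)" by (rule dvd_add)
  moreover have "(a - b) + (c - e) = (a + c) - (b + e)" by (simp add: algebra_simps)
  ultimately show ?thesis by simp
qed
lemma cg_mult: "d dvd a - b \<Longrightarrow> d dvd c - e \<Longrightarrow> d dvd (a * c) - (b * (e::'b::comm_ring_1))"
proof -
  assume "d dvd a - b" "d dvd c - e"
  then have "d dvd c * (a - b) + b * (c - e)" by (simp add: dvd_add dvd_mult)
  moreover have "c * (a - b) + b * (c - e) = a * c - b * e" by (simp add: algebra_simps)
  ultimately show ?thesis by simp
qed
lemma cg_pow: "d dvd a - b \<Longrightarrow> d dvd a ^ n - (b::'b::comm_ring_1) ^ n"
  by (induction n) (simp_all add: cg_mult)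

lemma lin_dvd:
  fixes x \<alpha> \<beta> :: "'a::field"
  assumes "[:1,x,1:] dvd [:\<beta>, \<alpha>:]" shows "\<alpha> = 0 \<and> \<beta> = 0"
proof (rule ccontr)
  assume "\<not> (\<alpha> = 0 \<and> \<beta> = 0)"
  then have ne: "[:\<beta>, \<alpha>:] \<noteq> 0" by auto
  have "degree [:1,x,1:] \<le> degree [:\<beta>, \<alpha>:]" by (rule dvd_imp_degree_le[OF assms ne])
  moreover have "degree [:\<beta>, \<alpha>:] \<le> 1" by simp
  moreover have "degree [:1,x,1::'a:] = 2" by simp
  ultimately show False by simp
qed

lemma deg1_form:
  fixes p :: "'a::field poly"
  assumes "degree p \<le> 1" shows "p = [:coeff p 0, coeff p 1:]"
proof (rule poly_eqI)
  fix n show "coeff p n = coeff [:coeff p 0, coeff p 1:] n"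
    using assms coeff_eq_0[of p n]
    by (cases n; cases "n - 1") (auto simp: coeff_pCons)
qed

lemma powL:
  fixes x :: "'a::field"
  assumes two: "(2::'a) = 0"
  shows "[:1,x,1:] dvd ([:0,1:]^(Suc k) - [:Useq x k, Useq x (Suc k):])"
proof (induction k)
  case 0 then show ?case by simp
next
  case (Suc k)
  define a where "a = Useq x k"
  define b where "b = Useq x (Suc k)"
  have e: "[:0,1::'a:]^(Suc (Suc k)) - [:Useq x (Suc k), Useq x (Suc (Suc k)):]
     = [:0,1:] * ([:0,1:]^(Suc k) - [:a, b:]) + ([:0, a, b:] - [:b, x*b+a:])"
    unfolding a_def b_def by (simp add: algebra_simps)
  have n1: "-b = b" and n2: "-(x*b) = x*b" using char2_neg[OF two] by auto
  have "[:0, a, b:] - [:b, x*b+a:] = [:-b, -(x*b), b:]" by simp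
  also have "\<dots> = [:b, x*b, b:]" by (simp only: n1 n2)
  also have "\<dots> = smult b [:1,x,1:]" by (simp add: mult.commute)
  finally have "[:0, a, b:] - [:b, x*b+a:] = smult b [:1,x,1:]" .
  then have "[:1,x,1:] dvd [:0, a, b:] - [:b, x*b+a:]"
    by (simp only:) (rule dvd_smult[OF dvd_refl])
  moreover have "[:1,x,1:] dvd [:0,1:] * ([:0,1:]^(Suc k) - [:a, b:])"
    using Suc unfolding a_def b_def by (rule dvd_mult)
  ultimately show ?case unfolding e by (rule dvd_add[rotated])
qed



lemma card_ge2: "card (UNIV::'a::{field,finite} set) \<ge> 2"
proof -
  have "card {0::'a, 1} \<le> card (UNIV::'a set)" by (rule card_mono) auto
  then show ?thesis by simp
qed

lemma char2_of_card:
  assumes "card (UNIV::'a::{field,finite} set) = 2 ^ k"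
  shows "(2::'a) = 0" and "k \<ge> 1"
proof -
  show k: "k \<ge> 1" using card_ge2[where 'a='a] assms
    by (cases k) auto
  have ev: "even (card (UNIV::'a set))" using assms k by (cases k) auto
  have "(-1::'a) ^ card (UNIV::'a set) = -1" by (rule fermat_ff)
  moreover have "(-1::'a) ^ card (UNIV::'a set) = 1" using ev by simp
  ultimately have "(1::'a) = -1" by simp
  then have "(1::'a) + 1 = 0" by (metis add.right_inverse)
  then show "(2::'a) = 0" by (simp add: one_add_one)
qed

context
  fixes x :: "'a::{field,finite}" and k :: nat
  assumes q: "card (UNIV::'a set) = 2 ^ k"
begin


lemma two: "(2::'a) = 0" using char2_of_card[OF q] by simp
lemma two_p: "(2::'a poly) = 0" using char2_poly[OF two] .

lemma frobq: "(p + r :: 'a poly) ^ card (UNIV::'a set) = p ^ card (UNIV::'a set) + r ^ card (UNIV::'a set)"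
  unfolding q by (rule frob2[OF two_p])

lemma constq: "[:c::'a:] ^ card (UNIV::'a set) = [:c:]"
  by (simp add: poly_const_pow fermat_ff)

lemma lin_q: "[:\<beta>, \<alpha>::'a:] ^ card (UNIV::'a set) = [:\<beta>:] + [:\<alpha>:] * [:0,1:] ^ card (UNIV::'a set)"
proof -
  have "[:\<beta>, \<alpha>::'a:] = [:\<beta>:] + [:\<alpha>:] * [:0,1:]" by simp
  then have "[:\<beta>, \<alpha>::'a:] ^ card (UNIV::'a set) = ([:\<beta>:] + [:\<alpha>:] * [:0,1:]) ^ card (UNIV::'a set)" by simp
  also have "\<dots> = [:\<beta>:] + [:\<alpha>:] * [:0,1:] ^ card (UNIV::'a set)"
    by (simp only: frobq power_mult_distrib constq)
  finally show ?thesis .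
qed

lemma f_eq: "[:1,x,1:] = 1 + [:x:] * [:0,1:] + [:0,1:] * [:0,1::'a:]"
  by (simp add: one_pCons)


lemma Lqq:
  assumes x: "x \<noteq> 0"
  shows "[:1,x,1:] dvd [:0,1::'a:] ^ (card (UNIV::'a set) * card (UNIV::'a set)) - [:0,1:]"
proof -
  let ?q = "card (UNIV::'a set)"
  let ?L = "[:0,1::'a:]"
  let ?f = "[:1,x,1::'a:]"
  define R where "R = ?L ^ ?q mod ?f"
  have fnz: "?f \<noteq> 0" by simp
  have cgR: "?f dvd ?L ^ ?q - R" unfolding R_def minus_mod_eq_mult_div by (rule dvd_triv_left)
  have "R = 0 \<or> degree R < degree ?f" unfolding R_def using degree_mod_less[OF fnz] by blast
  then have "degree R \<le> 1" by auto
  define \<alpha> where "\<alpha> = coeff R 1"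
  define \<beta> where "\<beta> = coeff R 0"
  have R: "R = [:\<beta>, \<alpha>:]" unfolding \<alpha>_def \<beta>_def by (rule deg1_form) fact
  have q1: "?q \<ge> 1" using card_ge2[where 'a='a] by simp
  have "?f dvd ?f ^ ?q" using q1 by (simp add: dvd_power)
  also have "?f ^ ?q = 1 + [:x:] * ?L ^ ?q + ?L ^ ?q * ?L ^ ?q"
    by (simp only: f_eq frobq power_mult_distrib constq power_one)
  finally have d1: "?f dvd 1 + [:x:] * ?L ^ ?q + ?L ^ ?q * ?L ^ ?q" .
  have d2: "?f dvd (1 + [:x:] * ?L ^ ?q + ?L ^ ?q * ?L ^ ?q) - (1 + [:x:] * R + R * R)"
    by (intro cg_add cg_mult cgR dvd_refl) (simp_all)
  have "?f dvd 1 + [:x:] * R + R * R"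
    using dvd_diff[OF d1 d2] by (simp add: add.assoc)
  moreover have "1 + [:x:] * R + R * R - smult (\<alpha>*\<alpha>) ?f
      = [:1 + x*\<beta> + \<beta>*\<beta> - \<alpha>*\<alpha>, x*\<alpha> + 2*\<alpha>*\<beta> - \<alpha>*\<alpha>*x:]"
    unfolding R by (simp add: one_pCons algebra_simps)
  ultimately have "?f dvd [:1 + x*\<beta> + \<beta>*\<beta> - \<alpha>*\<alpha>, x*\<alpha> + 2*\<alpha>*\<beta> - \<alpha>*\<alpha>*x:]"
    by (metis dvd_diff dvd_smult dvd_refl)
  from lin_dvd[OF this] have e1: "x*\<alpha> + 2*\<alpha>*\<beta> - \<alpha>*\<alpha>*x = 0"
     and e2: "1 + x*\<beta> + \<beta>*\<beta> - \<alpha>*\<alpha> = 0" by auto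
  have "x * (\<alpha> * (1 - \<alpha>)) = 0" using e1 two by (simp add: algebra_simps)
  then have "\<alpha> = 0 \<or> \<alpha> = 1" using x by auto
  then show ?thesis
  proof
    assume a1: "\<alpha> = 1"
    have "?L ^ (?q * ?q) = (?L ^ ?q) ^ ?q" by (simp add: power_mult)
    moreover have "?f dvd (?L ^ ?q) ^ ?q - R ^ ?q" by (rule cg_pow[OF cgR])
    moreover have "R ^ ?q = [:\<beta>:] + [:1:] * ?L ^ ?q" unfolding R a1 by (rule lin_q)
    moreover have "?f dvd ([:\<beta>:] + [:1:] * ?L ^ ?q) - ([:\<beta>:] + [:1:] * R)"
      by (intro cg_add cg_mult cgR) simp_all
    moreover have "[:\<beta>:] + [:1:] * R = ?L"
      unfolding R a1 using two by simp
    ultimately show ?thesis by (metis cg_trans)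
  next
    assume a0: "\<alpha> = 0"
    have eb: "1 + x*\<beta> + \<beta>*\<beta> = 0" using e2 a0 by simp
    define P where "P = [:\<beta>, 1::'a:]"
    have "P ^ ?q = [:\<beta>:] + [:1:] * ?L ^ ?q" unfolding P_def by (rule lin_q)
    moreover have "?f dvd ([:\<beta>:] + [:1:] * ?L ^ ?q) - ([:\<beta>:] + [:1:] * R)"
      by (intro cg_add cg_mult cgR) simp_all
    moreover have "[:\<beta>:] + [:1:] * R = 0"
      unfolding R a0 using two by simp
    ultimately have "?f dvd P ^ ?q - 0" by metis
    then have Pq: "?f dvd P ^ ?q" by simp
    have "P * P - [:x:] * P - ?f = [:\<beta>*\<beta> - x*\<beta> - 1, 2*\<beta> - 2*x:]"
      unfolding P_def by (simp add: one_pCons algebra_simps)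
    also have "\<beta>*\<beta> - x*\<beta> - 1 = (1 + x*\<beta> + \<beta>*\<beta>) - 2*(x*\<beta>) - 2"
      by (simp add: algebra_simps)
    also have "\<dots> = 0" using eb two by simp
    also have "2*\<beta> - 2*x = 0" using two by simp
    finally have "P * P - [:x:] * P = ?f" by simp
    then have Psq: "?f dvd P * P - [:x:] * P" by simp
    have ind: "\<exists>c. c \<noteq> 0 \<and> ?f dvd P ^ (2 ^ j) - [:c:] * P" for j
    proof (induction j)
      case 0 show ?case by (intro exI[of _ 1]) simp
    next
      case (Suc j)
      then obtain c where c: "c \<noteq> 0" "?f dvd P ^ (2 ^ j) - [:c:] * P" by blast
      have "?f dvd P ^ (2 ^ j) * P ^ (2 ^ j) - ([:c:] * P) * ([:c:] * P)"
        by (rule cg_mult[OF c(2) c(2)])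
      moreover have "([:c:] * P) * ([:c:] * P) = [:c*c:] * (P * P)"
        by (simp add: algebra_simps)
      moreover have "?f dvd [:c*c:] * (P * P) - [:c*c*x:] * P"
      proof -
        have "?f dvd [:c*c:] * (P * P - [:x:] * P)" using Psq by (rule dvd_mult)
        moreover have "[:c*c:] * (P * P - [:x:] * P) = [:c*c:] * (P * P) - [:c*c*x:] * P"
          by (simp add: algebra_simps)
        ultimately show ?thesis by simp
      qed
      moreover have "P ^ (2 ^ Suc j) = P ^ (2 ^ j) * P ^ (2 ^ j)"
        by (simp add: power_add[symmetric] mult_2)
      ultimately have "?f dvd P ^ (2 ^ Suc j) - [:c*c*x:] * P" by (metis cg_trans)
      moreover have "c*c*x \<noteq> 0" using c(1) x by simp
      ultimately show ?case by blast
    qed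
    obtain c where c: "c \<noteq> 0" "?f dvd P ^ (2 ^ k) - [:c:] * P" using ind by blast
    have "?f dvd [:c:] * P" using dvd_diff[OF Pq[unfolded q] c(2)] by simp
    also have "[:c:] * P = [:c*\<beta>, c:]" unfolding P_def by simp
    finally have "c = 0" using lin_dvd by blast
    with c(1) show ?thesis by simp
  qed
qed

lemma Useq_nz:
  assumes x: "x \<noteq> 0" and N: "N \<ge> 2"
    and cop: "coprime N (card (UNIV::'a set) ^ 2 - 1)"
  shows "Useq x N \<noteq> 0"
proof
  assume U0: "Useq x N = 0"
  let ?q = "card (UNIV::'a set)"
  let ?L = "[:0,1::'a:]"
  let ?f = "[:1,x,1::'a:]"
  obtain M where M: "N = Suc (Suc M)" using N by (metis add_2_eq_Suc le_Suc_ex)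
  have "Useq x (Suc M) ^ 2 + Useq x N * Useq x M = 1" unfolding M by (rule cassini[OF two])
  then have U1: "Useq x (Suc M) = 1" using U0 sq_eq_one_char2[OF two] by simp
  have h: "?f dvd ?L ^ N - [:Useq x (Suc M), Useq x N:]"
    using powL[OF two, of x "Suc M"] unfolding M .
  moreover have "[:Useq x (Suc M), Useq x N:] = 1" using U1 U0 by (simp add: one_pCons)
  ultimately have LN: "?f dvd ?L ^ N - 1" by simp
  define Q where "Q = ?q * ?q - 1"
  have q1: "?q \<ge> 1" using card_ge2[where 'a='a] by simp
  have QQ: "?q * ?q = Q + 1" unfolding Q_def using q1 by (simp add: Suc_le_eq)
  have gcd1: "gcd N Q = 1" using cop unfolding Q_def by (simp add: power2_eq_square coprime_iff_gcd_eq_1)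
  obtain u v where uv: "N * u = Q * v + 1" using bezout_nat[of N Q] N gcd1 by auto
  have A: "?f dvd ?L ^ (N * u) - 1"
    using cg_pow[OF LN, of u] by (simp add: power_mult)
  have LQ: "?f dvd ?L ^ (Q + 1) - ?L" using Lqq[OF x] unfolding QQ .
  have B: "?f dvd ?L ^ (Q * w + 1) - ?L" for w
  proof (induction w)
    case 0 show ?case by simp
  next
    case (Suc w)
    have "?f dvd ?L ^ (Q * w) * ?L ^ (Q + 1) - ?L ^ (Q * w) * ?L"
      by (rule cg_mult[OF _ LQ]) simp
    moreover have "?L ^ (Q * w) * ?L ^ (Q + 1) = ?L ^ (Q * Suc w + 1)"
      by (simp add: power_add[symmetric] algebra_simps)
    moreover have "?L ^ (Q * w) * ?L = ?L ^ (Q * w + 1)" by simp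
    ultimately show ?case using Suc by (metis cg_trans)
  qed
  have "?f dvd ?L - 1" using cg_trans[OF cg_sym[OF B[of v]] A[unfolded uv]] .
  then have "?f dvd [:-1, 1:]" by (simp add: one_pCons)
  from lin_dvd[OF this] show False by simp
qed
end


definition tri :: "nat \<Rightarrow> 'a::field \<Rightarrow> 'a \<Rightarrow> (nat \<Rightarrow> 'a) \<Rightarrow> nat \<Rightarrow> 'a" where
  "tri n c b w i = (if 0 < i then b * w (i - 1) else 0) + c * w i + (if i + 1 < n then b * w (i + 1) else 0)"

lemma trisum:
  assumes i: "i < n"
  shows "(\<Sum>j\<in>{0..<n}. tridiag_toeplitz n c b $$ (i,j) * w j) = tri n c b w i"
proof -
  have "(\<Sum>j\<in>{0..<n}. tridiag_toeplitz n c b $$ (i,j) * w j)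
     = (\<Sum>j\<in>{0..<n}. (if j = i then c * w j else 0) + (if j = i - 1 then (if 0 < i then b * w j else 0) else 0)
            + (if j = i + 1 then b * w j else 0))"
    by (rule sum.cong) (auto simp: tridiag_toeplitz_def i)
  also have "\<dots> = (\<Sum>j\<in>{0..<n}. if j = i then c * w j else 0)
       + (\<Sum>j\<in>{0..<n}. if j = i - 1 then (if 0 < i then b * w j else 0) else 0)
       + (\<Sum>j\<in>{0..<n}. if j = i + 1 then b * w j else 0)"
    by (simp add: sum.distrib)
  also have "\<dots> = tri n c b w i"
    using i by (simp add: tri_def sum.delta)
  finally show ?thesis .
qed

lemma tri_lin: "tri n c b (\<lambda>j. f j + g j) i = tri n c b f i + tri n c b g i"
  by (simp add: tri_def algebra_simps)

lemma tri_plus1: "tri n (c + 1) b f i = f i + tri n c b f i"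
  by (simp add: tri_def algebra_simps)

lemma tri_inj:
  fixes c b :: "'a::field"
  assumes two: "(2::'a) = 0" and c: "c \<noteq> 0" and b: "b \<noteq> 0" and n: "n \<ge> 2"
    and U: "Useq (c / b) (n + 1) \<noteq> 0"
    and w: "\<forall>i<n. tri n c b w i = 0"
  shows "\<forall>i<n. w i = 0"
proof -
  define x where "x = c / b"
  have neg: "- y = y" for y :: 'a by (rule char2_neg[OF two])
  have row0: "c * w 0 + b * w 1 = 0" using w[rule_format, of 0] n by (simp add: tri_def)
  have rowm: "b * w j + c * w (j+1) + b * w (j+2) = 0" if "j + 2 < n" for j
    using w[rule_format, of "j+1"] that by (simp add: tri_def)
  have rowl: "b * w (n-2) + c * w (n-1) = 0"
    using w[rule_format, of "n-1"] n by (simp add: tri_def numeral_2_eq_2 Suc_diff_Suc)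
  have step: "w (j+2) = x * w (j+1) + w j" if "j + 2 < n" for j
  proof -
    have "b * w (j+2) = - (b * w j + c * w (j+1))" using rowm[OF that] by (simp add: eq_neg_iff_add_eq_0 algebra_simps)
    then have "b * w (j+2) = b * w j + c * w (j+1)" by (simp only: neg)
    then show ?thesis using b unfolding x_def by (simp add: field_simps)
  qed
  have w1: "w 1 = x * w 0"
  proof -
    have "b * w 1 = - (c * w 0)" using row0 by (simp add: eq_neg_iff_add_eq_0 algebra_simps)
    then have "b * w 1 = c * w 0" by (simp only: neg)
    then show ?thesis using b unfolding x_def by (simp add: field_simps)
  qed
  have seq: "j + 1 < n \<longrightarrow> w j = w 0 * Useq x (j+1) \<and> w (j+1) = w 0 * Useq x (j+2)" for j
  proof (induction j)
    case 0 show ?case using w1 by (simp add: mult.commute)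
  next
    case (Suc j)
    show ?case
    proof
      assume "Suc j + 1 < n"
      then have h: "w j = w 0 * Useq x (j+1)" "w (j+1) = w 0 * Useq x (j+2)" using Suc by auto
      have "w (j+2) = x * w (j+1) + w j" by (rule step) (use \<open>Suc j + 1 < n\<close> in simp)
      also have "\<dots> = w 0 * Useq x (j+3)" using h by (simp add: numeral_3_eq_3 numeral_2_eq_2 algebra_simps)
      finally show "w (Suc j) = w 0 * Useq x (Suc j + 1) \<and> w (Suc j + 1) = w 0 * Useq x (Suc j + 2)"
        using h by (simp add: numeral_3_eq_3 numeral_2_eq_2)
    qed
  qed
  obtain m where m: "n = m + 2" using n by (metis add.commute le_Suc_ex)
  have wa: "w m = w 0 * Useq x (m+1)" and wb: "w (m+1) = w 0 * Useq x (m+2)"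
    using seq[of m] m by auto
  have r0: "b * w m + c * w (m+1) = 0" using rowl m by simp
  have cx: "c = x * b" using b by (simp add: x_def)
  have r1: "b * w m + c * w (m+1) = w 0 * (b * (Useq x (m+1) + x * Useq x (m+2)))"
    unfolding wa wb cx by (simp add: algebra_simps del: Useq.simps)
  have r2: "Useq x (m+1) + x * Useq x (m+2) = Useq x (n+1)"
    using m by (simp add: numeral_3_eq_3 numeral_2_eq_2)
  have "w 0 * (b * Useq x (n+1)) = 0" using r0 r1 r2 by simp
  then have "w 0 = 0" using U b unfolding x_def by simp
  show ?thesis
  proof (intro allI impI)
    fix i assume i: "i < n"
    show "w i = 0"
    proof (cases "i + 1 < n")
      case True then show ?thesis using seq[of i] \<open>w 0 = 0\<close> by simp
    next
      case False then have "i = m + 1" using i m by simp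
      then show ?thesis using wb \<open>w 0 = 0\<close> by simp
    qed
  qed
qed



lemma gen_entry:
  assumes "l < n" "j < 2 * n"
  shows "gen_mat n a b $$ (l, j) = (if j < n then (if l = j then 1 else 0) else tridiag_toeplitz n a b $$ (l, j - n))"
  using assms by (simp add: gen_mat_def)

lemma gen_dims[simp]: "dim_row (gen_mat n a b) = n" "dim_col (gen_mat n a b) = 2 * n"
  by (simp_all add: gen_mat_def)

lemma tri_sym:
  assumes "l < n" "j < n"
  shows "tridiag_toeplitz n a b $$ (l, j) = tridiag_toeplitz n a b $$ (j, l)"
  using assms by (auto simp: tridiag_toeplitz_def)

lemma colsum:
  assumes j: "j < 2 * n" and v: "v \<in> carrier_vec n"
  shows "(transpose_mat (gen_mat n a b) *\<^sub>v v) $ j = (\<Sum>l\<in>{0..<n}. gen_mat n a b $$ (l, j) * v $ l)"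
proof -
  have "(transpose_mat (gen_mat n a b) *\<^sub>v v) $ j = row (transpose_mat (gen_mat n a b)) j \<bullet> v"
    using j by (simp add: index_mult_mat_vec)
  also have "\<dots> = (\<Sum>l\<in>{0..<n}. gen_mat n a b $$ (l, j) * v $ l)"
    unfolding scalar_prod_def using v j by (intro sum.cong) auto
  finally show ?thesis .
qed


lemma ycomp:
  assumes j: "j < 2 * n" and u: "u \<in> carrier_vec n"
  shows "(transpose_mat (gen_mat n a b) *\<^sub>v u) $ j =
     (if j < n then u $ j else tri n a b (\<lambda>l. u $ l) (j - n))"
proof (cases "j < n")
  case True
  have "(transpose_mat (gen_mat n a b) *\<^sub>v u) $ j = (\<Sum>l\<in>{0..<n}. (if l = j then u $ l else 0))"
    unfolding colsum[OF j u] using True j by (intro sum.cong) (auto simp: gen_entry)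
  also have "\<dots> = u $ j" using True by (simp add: sum.delta)
  finally show ?thesis using True by simp
next
  case False
  have "(transpose_mat (gen_mat n a b) *\<^sub>v u) $ j = (\<Sum>l\<in>{0..<n}. tridiag_toeplitz n a b $$ (j - n, l) * u $ l)"
    unfolding colsum[OF j u] using False j by (intro sum.cong) (auto simp: gen_entry tri_sym)
  also have "\<dots> = tri n a b (\<lambda>l. u $ l) (j - n)" using False j by (intro trisum) simp
  finally show ?thesis using False by simp
qed

lemma xcomp:
  assumes j: "j < 2 * n" and i: "i < n"
  shows "(transpose_mat (gen_mat n a b) *\<^sub>v unit_vec n i) $ j = gen_mat n a b $$ (i, j)"
proof -
  have "(transpose_mat (gen_mat n a b) *\<^sub>v unit_vec n i) $ j
      = (\<Sum>l\<in>{0..<n}. if l = i then gen_mat n a b $$ (l, j) else 0)"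
    unfolding colsum[OF j unit_vec_carrier] by (intro sum.cong) (auto simp: unit_vec_def)
  also have "\<dots> = gen_mat n a b $$ (i, j)" using i by (simp add: sum.delta)
  finally show ?thesis .
qed

lemma xy:
  assumes i: "i < n" and u: "u \<in> carrier_vec n"
  shows "(transpose_mat (gen_mat n a b) *\<^sub>v unit_vec n i) \<bullet> (transpose_mat (gen_mat n a b) *\<^sub>v u)
     = u $ i + tri n a b (\<lambda>j. tri n a b (\<lambda>l. u $ l) j) i"
proof -
  let ?G = "gen_mat n a b"
  let ?y = "transpose_mat ?G *\<^sub>v u"
  let ?x = "transpose_mat ?G *\<^sub>v unit_vec n i"
  define g where "g j = ?x $ j * ?y $ j" for j
  have "?x \<bullet> ?y = (\<Sum>j\<in>{0..<2*n}. g j)" unfolding scalar_prod_def g_def by simp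
  also have "\<dots> = (\<Sum>j\<in>{0..<n}. g j) + (\<Sum>j\<in>{n..<2*n}. g j)"
    by (rule sum.atLeastLessThan_concat[symmetric]) auto
  also have "(\<Sum>j\<in>{n..<2*n}. g j) = (\<Sum>j\<in>{0..<n}. g (j + n))"
    using sum.shift_bounds_nat_ivl[of g 0 n n] by (simp add: mult_2)
  also have "(\<Sum>j\<in>{0..<n}. g j) = (\<Sum>j\<in>{0..<n}. if j = i then u $ j else 0)"
    unfolding g_def using i u by (intro sum.cong) (auto simp: xcomp ycomp[OF _ u] gen_entry simp del: index_mult_mat_vec)
  also have "\<dots> = u $ i" using i by (simp add: sum.delta)
  also have "(\<Sum>j\<in>{0..<n}. g (j + n)) = (\<Sum>j\<in>{0..<n}. tridiag_toeplitz n a b $$ (i, j) * tri n a b (\<lambda>l. u $ l) j)"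
    unfolding g_def using i u by (intro sum.cong) (auto simp: xcomp ycomp[OF _ u] gen_entry simp del: index_mult_mat_vec)
  also have "\<dots> = tri n a b (\<lambda>j. tri n a b (\<lambda>l. u $ l) j) i" using i by (rule trisum)
  finally show ?thesis .
qed

lemma y_zero:
  "transpose_mat (gen_mat n a b) *\<^sub>v 0\<^sub>v n = 0\<^sub>v (2 * n)"
  by (rule eq_vecI) (auto simp: colsum simp del: index_mult_mat_vec)

theorem corollary2p7:
  fixes b :: "'a::{field,finite}" and n r m :: nat
  assumes "\<exists>k. card (UNIV :: 'a set) = 2 ^ k"
    and "b \<noteq> 0"
    and "n \<ge> 2"
    and "2 ^ r dvd n + 1" and "\<not> 2 ^ (r + 1) dvd n + 1"
    and "n + 1 = 2 ^ r * (m + 1)"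
    and "r \<ge> 1"
    and "gcd (m + 1) (card (UNIV :: 'a set) ^ 2 - 1) = 1"
  shows "\<forall>a::'a. a \<noteq> 1 \<longrightarrow> is_LCD (2 * n) (C_hat n a b)"
proof (intro allI impI)
  fix a :: 'a assume a1: "a \<noteq> 1"
  obtain k where q: "card (UNIV :: 'a set) = 2 ^ k" using assms(1) by blast
  have two: "(2::'a) = 0" and k1: "k \<ge> 1" using char2_of_card[OF q] by auto
  have c: "a + 1 \<noteq> 0"
  proof
    assume "a + 1 = 0"
    then have "a = - 1" by (simp add: eq_neg_iff_add_eq_0)
    then show False using a1 char2_neg[OF two, of 1] by simp
  qed
  have qe: "even (card (UNIV :: 'a set))" using q k1 by (cases k) auto
  have qpos: "card (UNIV :: 'a set) ^ 2 \<ge> 1" using card_ge2[where 'a='a] by (simp add: Suc_le_eq)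
  have odd: "odd (card (UNIV :: 'a set) ^ 2 - 1)" using qe qpos by auto
  have cop: "coprime (n + 1) (card (UNIV :: 'a set) ^ 2 - 1)"
    unfolding assms(6)
  proof (rule coprime_mult_left_iff[THEN iffD2], rule conjI)
    show "coprime (2 ^ r) (card (UNIV :: 'a set) ^ 2 - 1)" using odd by simp
    show "coprime (m + 1) (card (UNIV :: 'a set) ^ 2 - 1)" using assms(8) by (simp add: coprime_iff_gcd_eq_1)
  qed
  have U: "Useq ((a + 1) / b) (n + 1) \<noteq> 0"
    by (rule Useq_nz[OF q]) (use c assms(2,3) cop in auto)
  let ?G = "gen_mat n a b"
  show "is_LCD (2 * n) (C_hat n a b)"
    unfolding is_LCD_def C_hat_def code_of_def dual_code_def
  proof (intro equalityI subsetI)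
    fix y :: "'a vec" assume "y \<in> {transpose_mat ?G *\<^sub>v u |u. u \<in> carrier_vec (dim_row ?G)} \<inter>
        {y \<in> carrier_vec (2 * n). \<forall>x\<in>{transpose_mat ?G *\<^sub>v u |u. u \<in> carrier_vec (dim_row ?G)}. x \<bullet> y = 0}"
    then obtain u where u: "u \<in> carrier_vec n" and y: "y = transpose_mat ?G *\<^sub>v u"
      and dual: "\<And>x. x \<in> {transpose_mat ?G *\<^sub>v u |u. u \<in> carrier_vec (dim_row ?G)} \<Longrightarrow> x \<bullet> y = 0"
      by auto
    define z where "z j = tri n a b (\<lambda>l. u $ l) j" for j
    have E: "u $ i + tri n a b z i = 0" if i: "i < n" for i
    proof -
      have "transpose_mat ?G *\<^sub>v unit_vec n i \<in> {transpose_mat ?G *\<^sub>v u |u. u \<in> carrier_vec (dim_row ?G)}"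
        by auto
      from dual[OF this] show ?thesis using xy[OF i u] unfolding y z_def by simp
    qed
    define w where "w j = u $ j + z j" for j
    have "\<forall>i<n. tri n (a + 1) b w i = 0"
    proof (intro allI impI)
      fix i assume i: "i < n"
      have "tri n (a + 1) b w i = w i + tri n a b w i" by (rule tri_plus1)
      also have "tri n a b w i = tri n a b (\<lambda>l. u $ l) i + tri n a b z i"
        unfolding w_def by (rule tri_lin)
      also have "w i + (tri n a b (\<lambda>l. u $ l) i + tri n a b z i) = (u $ i + tri n a b z i) + (z i + z i)"
        unfolding w_def z_def by (simp add: algebra_simps)
      also have "z i + z i = 2 * z i" by (rule mult_2[symmetric])
      also have "(u $ i + tri n a b z i) + 2 * z i = 0" using E[OF i] two by simp
      finally show "tri n (a + 1) b w i = 0" .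
    qed
    from tri_inj[OF two c assms(2) assms(3) U this] have w0: "\<forall>i<n. w i = 0" .
    have "\<forall>i<n. tri n (a + 1) b (\<lambda>l. u $ l) i = 0"
    proof (intro allI impI)
      fix i assume i: "i < n"
      have "tri n (a + 1) b (\<lambda>l. u $ l) i = w i" unfolding w_def z_def by (rule tri_plus1)
      then show "tri n (a + 1) b (\<lambda>l. u $ l) i = 0" using w0 i by simp
    qed
    from tri_inj[OF two c assms(2) assms(3) U this] have "\<forall>i<n. u $ i = 0" .
    then have "u = 0\<^sub>v n" using u by (intro eq_vecI) auto
    then show "y \<in> {0\<^sub>v (2 * n)}" using y y_zero by simp
  next
    fix y :: "'a vec" assume "y \<in> {0\<^sub>v (2 * n)}"
    then have y: "y = 0\<^sub>v (2 * n)" by simp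
    have "y \<in> {transpose_mat ?G *\<^sub>v u |u. u \<in> carrier_vec (dim_row ?G)}"
      unfolding y by (intro CollectI exI[of _ "0\<^sub>v n"]) (auto simp: y_zero)
    moreover have "y \<in> {y \<in> carrier_vec (2 * n). \<forall>x\<in>{transpose_mat ?G *\<^sub>v u |u. u \<in> carrier_vec (dim_row ?G)}. x \<bullet> y = 0}"
      unfolding y by (auto simp: scalar_prod_def)
    ultimately show "y \<in> {transpose_mat ?G *\<^sub>v u |u. u \<in> carrier_vec (dim_row ?G)} \<inter>
        {y \<in> carrier_vec (2 * n). \<forall>x\<in>{transpose_mat ?G *\<^sub>v u |u. u \<in> carrier_vec (dim_row ?G)}. x \<bullet> y = 0}"
      by blast
  qed
qed
end
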